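(* For a non-negative integer $n$ let $a_n\langle n!\rangle=\sum_{k=0}^{\infty}k^n\,2^{-k}$ (with $0^0=1$); these are integers $2,2,6,26,150,1082,\dots$. For every natural number $n$ such that $n+1$ is prime, \[ a_n\langle n!\rangle\equiv 0 \pmod{n+1}. \] *)

theory Defs
  imports Complex_Main "HOL-Computational_Algebra.Primes"
begin

definition a_seq :: "nat \<Rightarrow> real" where
  "a_seq n = (\<Sum>k. real k ^ n / 2 ^ k)"

end

theory Submission imports Defs "HOL-Number_Theory.Number_Theory" "HOL-Real_Asymp.Real_Asymp" begin

fun G :: "nat \<Rightarrow> nat \<Rightarrow> nat" where
  "G 0 0 = 1"
| "G 0 (Suc m) = 0"
| "G (Suc n) 0 = 0"
| "G (Suc n) (Suc m) = Suc m * (G n (Suc m) + G n m)"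

lemma G_zero: "n < m \<Longrightarrow> G n m = 0"
  by (induction n m rule: G.induct) auto

lemma times_choose: "k * (k choose m) = Suc m * (k choose Suc m) + m * (k choose m)"
proof -
  have "(k - m) * (k choose m) = Suc m * (k choose Suc m)"
    by (metis Suc_times_binomial_eq binomial_absorb_comp mult.commute Suc_times_binomial
        binomial_absorption diff_Suc_1 mult_eq_0_iff not_less_eq binomial_eq_0 zero_less_Suc)
  moreover have "k * (k choose m) = (k - m) * (k choose m) + m * (k choose m)"
    by (cases "m \<le> k") (auto simp: algebra_simps)
  ultimately show ?thesis by simp
qed

lemma pow_G: "k ^ n = (\<Sum>m\<le>n. (k choose m) * G n m)"
proof (induction n)
  case 0
  then show ?case by simp
next
  case (Suc n)
  have "k ^ Suc n = (\<Sum>m\<le>n. G n m * (k * (k choose m)))"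
    using Suc by (simp add: sum_distrib_left algebra_simps)
  also have "\<dots> = (\<Sum>m\<le>n. Suc m * G n m * (k choose Suc m)) + (\<Sum>m\<le>n. m * G n m * (k choose m))"
    by (simp add: times_choose sum.distrib algebra_simps)
  also have "(\<Sum>m\<le>n. m * G n m * (k choose m)) = (\<Sum>m\<le>n. Suc m * G n (Suc m) * (k choose Suc m))"
  proof -
    have "(\<Sum>m\<le>Suc n. m * G n m * (k choose m)) = (\<Sum>m\<le>n. Suc m * G n (Suc m) * (k choose Suc m))"
      by (subst sum.atMost_Suc_shift) simp
    moreover have "(\<Sum>m\<le>Suc n. m * G n m * (k choose m)) = (\<Sum>m\<le>n. m * G n m * (k choose m))"
      by (simp add: G_zero)
    ultimately show ?thesis by simp
  qed
  also have "(\<Sum>m\<le>n. Suc m * G n m * (k choose Suc m)) + \<dots> = (\<Sum>m\<le>n. (k choose Suc m) * G (Suc n) (Suc m))"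
    by (simp add: sum.distrib[symmetric] algebra_simps)
  also have "\<dots> = (\<Sum>m\<le>Suc n. (k choose m) * G (Suc n) m)"
    by (subst sum.atMost_Suc_shift) simp
  finally show ?case .
qed

lemma summable_pow: "summable (\<lambda>k. real k ^ n / 2 ^ k)"
proof -
  have "((\<lambda>k. real k ^ n * (2/3) ^ k) \<longlongrightarrow> 0) at_top" by real_asymp
  then have "eventually (\<lambda>k. real k ^ n * (2/3) ^ k < 1) at_top"
    by (simp add: order_tendstoD(2))
  then have ev: "eventually (\<lambda>k. norm (real k ^ n / 2 ^ k) \<le> (3/4) ^ k) at_top"
  proof (rule eventually_mono)
    fix k :: nat assume h: "real k ^ n * (2/3) ^ k < 1"
    have "real k ^ n / 2 ^ k = (real k ^ n * (2/3) ^ k) * (3/4) ^ k"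
      by (simp add: power_divide field_simps flip: power_mult_distrib)
    also have "\<dots> \<le> 1 * (3/4)^k" using h by (intro mult_right_mono) auto
    finally show "norm (real k ^ n / 2 ^ k) \<le> (3/4) ^ k" by simp
  qed
  show ?thesis
    by (rule summable_comparison_test_ev[OF ev]) (simp add: summable_geometric)
qed

lemma summable_choose: "summable (\<lambda>k. real (k choose m) / 2 ^ k)"
proof (rule summable_comparison_test[OF _ summable_pow[of m]])
  show "\<exists>N. \<forall>k\<ge>N. norm (real (k choose m) / 2 ^ k) \<le> real k ^ m / 2 ^ k"
  proof (intro exI allI impI)
    fix k :: nat
    have "k choose m \<le> k ^ m"
      by (cases "m \<le> k") (auto intro: binomial_le_pow simp: binomial_eq_0)
    then have "real (k choose m) \<le> real k ^ m" by (metis of_nat_le_iff of_nat_power)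
    then show "norm (real (k choose m) / 2 ^ k) \<le> real k ^ m / 2 ^ k"
      by (simp add: divide_right_mono)
  qed
qed

lemma suminf_choose: "(\<Sum>k. real (k choose m) / 2 ^ k) = 2"
proof (induction m)
  case 0
  have "(\<Sum>k. (1/2::real) ^ k) = 2" by (simp add: suminf_geometric)
  then show ?case by (simp add: power_divide)
next
  case (Suc m)
  let ?f = "\<lambda>k. real (k choose Suc m) / 2 ^ k"
  let ?g = "\<lambda>k. real (k choose m) / 2 ^ k"
  have "suminf ?f = ?f 0 + (\<Sum>k. ?f (Suc k))"
    using suminf_split_head[OF summable_choose[of "Suc m"]] by simp
  also have "(\<lambda>k. ?f (Suc k)) = (\<lambda>k. (?g k + ?f k) / 2)"
    by (auto simp: field_simps)
  also have "(\<Sum>k. (?g k + ?f k) / 2) = (suminf ?g + suminf ?f) / 2"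
    using summable_choose[of m] summable_choose[of "Suc m"]
    by (simp add: suminf_divide suminf_add summable_add summable_divide)
  finally have "suminf ?f = (2 + suminf ?f) / 2" using Suc by simp
  then show ?case by simp
qed

lemma a_seq_G: "a_seq n = 2 * real (\<Sum>m\<le>n. G n m)"
proof -
  have "a_seq n = (\<Sum>k. \<Sum>m\<le>n. real (G n m) * (real (k choose m) / 2 ^ k))"
    unfolding a_seq_def
    by (subst pow_G[of _ n, THEN arg_cong[where f=real], simplified])
      (simp add: sum_divide_distrib algebra_simps)
  also have "\<dots> = (\<Sum>m\<le>n. \<Sum>k. real (G n m) * (real (k choose m) / 2 ^ k))"
    by (rule suminf_sum) (intro summable_mult summable_choose)
  also have "\<dots> = (\<Sum>m\<le>n. real (G n m) * 2)"
  proof -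
    have h: "(\<Sum>k. real (G n m) * (real (k choose m) / 2 ^ k)) = real (G n m) * 2" for m
      using suminf_mult[OF summable_choose, of "real (G n m)" m] suminf_choose[of m] by simp
    show ?thesis by (simp only: h)
  qed
  finally show ?thesis by (simp add: sum_distrib_left mult.commute)
qed

lemma sum_skip0: "0 < (k::nat) \<Longrightarrow> (\<Sum>m<k. if m = 0 then 0 else g m) = (\<Sum>m<k. g m) - (g 0 :: int)"
  by (cases k) (simp_all only: sum.lessThan_Suc_shift, simp_all)

lemma alt_part: assumes "0 < k"
  shows "(\<Sum>m<k. if m = 0 then 0 else int (k choose m) * (-1) ^ (m+1)) = (-1) ^ k + 1"
proof -
  have a: "(\<Sum>m\<le>k. (-1) ^ m * int (k choose m)) = 0"
    using choose_alternating_sum[OF assms] by simp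
  have b: "(\<Sum>m\<le>k. (-1) ^ m * int (k choose m)) = (\<Sum>m<k. (-1) ^ m * int (k choose m)) + (-1)^k"
    by (simp add: lessThan_Suc_atMost[symmetric])
  have c: "(\<Sum>m<k. int (k choose m) * (-1) ^ (m+1)) = - (\<Sum>m<k. (-1) ^ m * int (k choose m))"
    by (simp add: sum_negf[symmetric] mult.commute)
  show ?thesis using sum_skip0[OF assms, of "\<lambda>m. int (k choose m) * (-1) ^ (m+1)"] a b c
    by simp
qed

lemma alt_even: "(\<Sum>m\<le>2*j. if m = 0 then 0 else (-1::int) ^ (m+1)) = 0"
  by (induction j) (simp_all add: sum.atMost_Suc)

lemma G_mod:
  assumes p: "prime p" and n: "n = p - 1" and k: "1 \<le> k" "k \<le> n"
  shows "int p dvd (int (G n k) - (-1) ^ (k+1))"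
  using k
proof (induction k rule: less_induct)
  case (less k)
  have p1: "p > 1" using p prime_gt_1_nat by blast
  have npos: "n > 0" using less n by simp
  then have G0: "G n 0 = 0" by (cases n) auto
  have "[k ^ n = 1] (mod p)"
    unfolding n using p less n by (intro fermat_theorem) (auto dest: dvd_imp_le)
  then have fer: "int p dvd (int k ^ n - 1)"
    by (metis cong_iff_dvd_diff cong_int_iff of_nat_1 of_nat_power)
  have "k ^ n = (\<Sum>m\<le>n. (k choose m) * G n m)" by (rule pow_G)
  also have "\<dots> = (\<Sum>m\<le>k. (k choose m) * G n m)"
    by (rule sum.mono_neutral_right) (use less in \<open>auto simp: binomial_eq_0\<close>)
  finally have "int k ^ n = (\<Sum>m\<le>k. int (k choose m) * int (G n m))"
    by (metis (no_types, lifting) of_nat_mult of_nat_power of_nat_sum sum.cong)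
  also have "\<dots> = int (G n k) + (\<Sum>m<k. if m = 0 then 0 else int (k choose m) * int (G n m))"
    by (simp add: lessThan_Suc_atMost[symmetric] G0 cong: if_cong)
      (rule sum.cong, auto simp: G0)
  finally have eq: "int k ^ n = int (G n k) + (\<Sum>m<k. if m = 0 then 0 else int (k choose m) * int (G n m))" .
  have S: "int p dvd ((\<Sum>m<k. if m = 0 then 0 else int (k choose m) * int (G n m))
      - (\<Sum>m<k. if m = 0 then 0 else int (k choose m) * (-1) ^ (m+1)))"
    unfolding sum_subtractf[symmetric]
  proof (rule dvd_sum)
    fix m assume m: "m \<in> {..<k}"
    show "int p dvd ((if m = 0 then 0 else int (k choose m) * int (G n m)) -
             (if m = 0 then 0 else int (k choose m) * (-1) ^ (m+1)))"
    proof (cases "m = 0")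
      case False
      then have "int p dvd (int (G n m) - (-1) ^ (m+1))"
        using less m by (intro less.IH) auto
      then have "int p dvd (int (k choose m) * (int (G n m) - (-1) ^ (m+1)))" by simp
      then show ?thesis using False by (simp add: algebra_simps)
    qed simp
  qed
  have "int (G n k) - (-1) ^ (k+1) = (int k ^ n - 1) - ((\<Sum>m<k. if m = 0 then 0 else int (k choose m) * int (G n m))
      - (\<Sum>m<k. if m = 0 then 0 else int (k choose m) * (-1) ^ (m+1)))"
    using eq alt_part[of k] less by simp
  moreover have "int p dvd ((int k ^ n - 1) - ((\<Sum>m<k. if m = 0 then 0 else int (k choose m) * int (G n m))
      - (\<Sum>m<k. if m = 0 then 0 else int (k choose m) * (-1) ^ (m+1))))"
    by (rule dvd_diff[OF fer S])
  ultimately show ?case by (simp only:)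
qed

lemma main_dvd:
  assumes p: "prime p" and n: "n = p - 1" and p2: "p \<noteq> 2"
  shows "int p dvd (\<Sum>m\<le>n. int (G n m))"
proof -
  have "p > 2" using prime_ge_2_nat[OF p] p2 by simp
  then have "odd p" using p prime_odd_nat by blast
  then have "even n" using n \<open>p > 2\<close> by simp
  then obtain j where j: "n = 2 * j" by (rule evenE)
  have npos: "n > 0" using n \<open>p > 2\<close> by simp
  then have G0: "G n 0 = 0" by (cases n) auto
  have "int p dvd ((\<Sum>m\<le>n. int (G n m)) - (\<Sum>m\<le>n. if m = 0 then 0 else (-1::int) ^ (m+1)))"
    unfolding sum_subtractf[symmetric]
    by (rule dvd_sum) (use G_mod[OF p n] G0 in auto)
  then show ?thesis using alt_even[of j] j by simp
qed

theorem mainTheorem4: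
  fixes n :: nat
  assumes "prime (n + 1)"
  shows "\<exists>m::int. a_seq n = real (n + 1) * of_int m"
proof (cases "n + 1 = 2")
  case True
  then have "a_seq n = real (n + 1) * of_int (int (\<Sum>m\<le>n. G n m))"
    using a_seq_G[of n] by simp
  then show ?thesis by blast
next
  case False
  have "int (n + 1) dvd (\<Sum>m\<le>n. int (G n m))"
    using main_dvd[OF assms _ False] by simp
  then obtain q where q: "(\<Sum>m\<le>n. int (G n m)) = int (n + 1) * q" by blast
  have "a_seq n = 2 * real_of_int (\<Sum>m\<le>n. int (G n m))"
    using a_seq_G[of n] by simp
  also have "\<dots> = real (n + 1) * of_int (2 * q)" using q by simp
  finally show ?thesis by blast
qed

end
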